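(* Let $T$ and $T'$ be two proper caterpillars with the same $U$-polynomial. Then for any $\beta\in\Phi(T)$ and $\beta'\in\Phi(T')$, $\mathcal{L}(\beta,\mathbf{x})=\mathcal{L}(\beta',\mathbf{x})$.
   Context: Let $\mathbf{x}=x_1,x_2,\ldots$ be commuting indeterminates and $\mathbf{x}_\lambda=x_{\lambda_1}\cdots x_{\lambda_l}$ for a partition $\lambda$. For a tree $T=(V,E)$, $U_T(\mathbf{x})=\sum_{A\subseteq E}\mathbf{x}_{\lambda(A)}$, where $\lambda(A)$ is the partition of $|V|$ formed by the component sizes of $(V,A)$. A composition is a finite nonempty sequence of positive integers; its type $\lambda(\alpha)$ is its parts sorted decreasingly; $\alpha\succeq\beta$ ($\alpha$ is a coarsening of $\beta$) if $\alpha$ arises from $\beta$ by summing blocks of consecutive parts; $\mathcal{L}(\beta,\mathbf{x})=\sum_{\alpha\succeq\beta}\mathbf{x}_{\lambda(\alpha)}$. A caterpillar is a tree whose internal vertices induce a non-trivial path (the spine); it is proper if every internal vertex is adjacent to a leaf. For a proper caterpillar with spine $v_1\cdots v_k$, $\beta_i$ is $1$ plus the number of leaves adjacent to $v_i$, and $\Phi(T)=\{\beta_1\cdots\beta_k,\ \beta_k\cdots\beta_1\}$. *)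

theory Defs
  imports Main "HOL-Library.Multiset"
begin

text \<open>Monomials in commuting indeterminates x_1, x_2, ... are represented as multisets of
  indices (x_lambda for a partition lambda is the multiset of its parts), and polynomials
  with natural-number coefficients as multisets of monomials (a sum of monomials).\<close>

definition adj :: "'a set set \<Rightarrow> ('a \<times> 'a) set" where
  "adj A = {(u, w). {u, w} \<in> A}"

definition component :: "'a set \<Rightarrow> 'a set set \<Rightarrow> 'a \<Rightarrow> 'a set" where
  "component V A v = {w \<in> V. (v, w) \<in> (adj A)\<^sup>*}"

definition components :: "'a set \<Rightarrow> 'a set set \<Rightarrow> 'a set set" where
  "components V A = component V A ` V"

definition comp_partition :: "'a set \<Rightarrow> 'a set set \<Rightarrow> nat multiset" where
  "comp_partition V A = image_mset card (mset_set (components V A))"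

definition is_graph :: "'a set \<Rightarrow> 'a set set \<Rightarrow> bool" where
  "is_graph V E \<longleftrightarrow> finite V \<and> (\<forall>e\<in>E. e \<subseteq> V \<and> card e = 2)"

definition connected_graph :: "'a set \<Rightarrow> 'a set set \<Rightarrow> bool" where
  "connected_graph V E \<longleftrightarrow> V \<noteq> {} \<and> (\<forall>u\<in>V. \<forall>w\<in>V. (u, w) \<in> (adj E)\<^sup>*)"

definition is_tree :: "'a set \<Rightarrow> 'a set set \<Rightarrow> bool" where
  "is_tree V E \<longleftrightarrow> is_graph V E \<and> connected_graph V E \<and>
     (\<forall>e\<in>E. \<not> connected_graph V (E - {e}))"

definition U_poly :: "'a set \<Rightarrow> 'a set set \<Rightarrow> nat multiset multiset" where
  "U_poly V E = image_mset (comp_partition V) (mset_set (Pow E))"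

definition degree :: "'a set set \<Rightarrow> 'a \<Rightarrow> nat" where
  "degree E v = card {e \<in> E. v \<in> e}"

definition is_leaf :: "'a set \<Rightarrow> 'a set set \<Rightarrow> 'a \<Rightarrow> bool" where
  "is_leaf V E v \<longleftrightarrow> v \<in> V \<and> degree E v = 1"

definition is_internal :: "'a set \<Rightarrow> 'a set set \<Rightarrow> 'a \<Rightarrow> bool" where
  "is_internal V E v \<longleftrightarrow> v \<in> V \<and> degree E v \<ge> 2"

definition is_spine :: "'a set \<Rightarrow> 'a set set \<Rightarrow> 'a list \<Rightarrow> bool" where
  "is_spine V E vs \<longleftrightarrow> distinct vs \<and> length vs \<ge> 2 \<and>
     set vs = {v. is_internal V E v} \<and>
     (\<forall>i<length vs. \<forall>j<length vs. {vs ! i, vs ! j} \<in> E \<longleftrightarrow> (i + 1 = j \<or> j + 1 = i))"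

definition is_caterpillar :: "'a set \<Rightarrow> 'a set set \<Rightarrow> bool" where
  "is_caterpillar V E \<longleftrightarrow> is_tree V E \<and> (\<exists>vs. is_spine V E vs)"

definition is_proper_caterpillar :: "'a set \<Rightarrow> 'a set set \<Rightarrow> bool" where
  "is_proper_caterpillar V E \<longleftrightarrow> is_caterpillar V E \<and>
     (\<forall>v. is_internal V E v \<longrightarrow> (\<exists>u. is_leaf V E u \<and> {u, v} \<in> E))"

definition spine_comp :: "'a set \<Rightarrow> 'a set set \<Rightarrow> 'a list \<Rightarrow> nat list" where
  "spine_comp V E vs = map (\<lambda>v. 1 + card {u. is_leaf V E u \<and> {u, v} \<in> E}) vs"

definition Phi :: "'a set \<Rightarrow> 'a set set \<Rightarrow> nat list set" where
  "Phi V E = {spine_comp V E vs | vs. is_spine V E vs} \<union>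
             {rev (spine_comp V E vs) | vs. is_spine V E vs}"

definition is_composition :: "nat list \<Rightarrow> bool" where
  "is_composition \<alpha> \<longleftrightarrow> \<alpha> \<noteq> [] \<and> (\<forall>a\<in>set \<alpha>. a > 0)"

definition coarsening :: "nat list \<Rightarrow> nat list \<Rightarrow> bool" where
  "coarsening \<alpha> \<beta> \<longleftrightarrow> (\<exists>bs. concat bs = \<beta> \<and> (\<forall>b\<in>set bs. b \<noteq> []) \<and> \<alpha> = map sum_list bs)"

definition L_poly :: "nat list \<Rightarrow> nat multiset multiset" where
  "L_poly \<beta> = image_mset mset (mset_set {\<alpha>. is_composition \<alpha> \<and> coarsening \<alpha> \<beta>})"

end

theory Submission
  imports Defs
begin


definition cutf :: "nat set \<Rightarrow> nat \<Rightarrow> nat" where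
  "cutf K i = card ({..<i} - K)"

definition Wt :: "nat list \<Rightarrow> nat set \<Rightarrow> nat \<Rightarrow> nat" where
  "Wt bs K c = (\<Sum>i<length bs. if cutf K i = c then bs!i else 0)"

definition mrg :: "nat list \<Rightarrow> nat set \<Rightarrow> nat list" where
  "mrg bs K = map (Wt bs K) [0..<Suc (cutf K (length bs - 1))]"

fun addhd :: "nat \<Rightarrow> nat list \<Rightarrow> nat list" where
  "addhd b [] = []" | "addhd b (a#as) = (b+a)#as"

definition Co :: "nat list \<Rightarrow> nat list set" where
  "Co bs = {a. is_composition a \<and> coarsening a bs}"

lemma cutf_0[simp]: "cutf K 0 = 0"
  by (simp add: cutf_def)

lemma cutf_Suc: "cutf K (Suc i) = cutf K i + (if i \<in> K then 0 else 1)"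
proof (cases "i \<in> K")
  case True
  then have "{..<Suc i} - K = {..<i} - K" by (auto simp: less_Suc_eq)
  then show ?thesis using True by (simp add: cutf_def)
next
  case False
  then have "{..<Suc i} - K = insert i ({..<i} - K)" by auto
  then show ?thesis using False by (simp add: cutf_def)
qed

lemma cutf_shift1: "cutf (Suc ` K) (Suc i) = Suc (cutf K i)"
  by (induction i) (auto simp: cutf_Suc)

lemma cutf_shift2: "cutf (insert 0 (Suc ` K)) (Suc i) = cutf K i"
  by (induction i) (auto simp: cutf_Suc)

lemma cutf_mono: "i \<le> j \<Longrightarrow> cutf K i \<le> cutf K j"
  unfolding cutf_def by (rule card_mono) auto

lemma cutf_eq_kept:
  assumes "i \<le> t" "t < j" "cutf K i = cutf K j"
  shows "t \<in> K"
proof (rule ccontr)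
  assume "t \<notin> K"
  then have "cutf K (Suc t) = Suc (cutf K t)" by (simp add: cutf_Suc)
  moreover have "cutf K i \<le> cutf K t" using assms(1) by (rule cutf_mono)
  moreover have "cutf K (Suc t) \<le> cutf K j" using assms(2) by (intro cutf_mono) simp
  ultimately show False using assms by linarith
qed

lemma cutf_image: "cutf K ` {..<Suc n} = {0..<Suc (cutf K n)}"
proof (induction n)
  case 0
  then show ?case by auto
next
  case (Suc n)
  have "cutf K ` {..<Suc (Suc n)} = insert (cutf K (Suc n)) (cutf K ` {..<Suc n})"
    by (simp add: lessThan_Suc)
  then show ?case using Suc by (auto simp: cutf_Suc)
qed

lemma Wt_Cons: "Wt (b#bs) K c = (if cutf K 0 = c then b else 0) +
   (\<Sum>i<length bs. if cutf K (Suc i) = c then bs!i else 0)"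
  unfolding Wt_def by (simp only: length_Cons sum.lessThan_Suc_shift nth_Cons_Suc nth_Cons_0)

lemma mrg_shift1: "mrg (b#c#bs) (Suc ` K) = b # mrg (c#bs) K"
proof -
  have W0: "Wt (b#c#bs) (Suc ` K) 0 = b"
    unfolding Wt_Cons[of b "c#bs"] cutf_shift1 cutf_0 by simp
  have WS: "Wt (b#c#bs) (Suc ` K) (Suc x) = Wt (c#bs) K x" for x
    unfolding Wt_Cons[of b "c#bs"] cutf_shift1 Suc_inject cutf_0 by (simp only: Zero_not_Suc if_False add_0 Wt_def nat.inject)
  have "length (b#c#bs) - 1 = Suc (length (c#bs) - 1)" by simp
  then have "mrg (b#c#bs) (Suc ` K) = map (Wt (b#c#bs) (Suc ` K)) [0..<Suc (Suc (cutf K (length (c#bs) - 1)))]"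
    unfolding mrg_def by (simp only: cutf_shift1)
  also have "[0..<Suc (Suc (cutf K (length (c#bs) - 1)))] = 0 # map Suc [0..<Suc (cutf K (length (c#bs) - 1))]"
    by (simp add: upt_conv_Cons map_Suc_upt del: upt_Suc)
  finally show ?thesis using W0 WS by (simp add: mrg_def comp_def del: upt_Suc)
qed

lemma mrg_shift2: "mrg (b#c#bs) (insert 0 (Suc ` K)) = addhd b (mrg (c#bs) K)"
proof -
  have W: "Wt (b#c#bs) (insert 0 (Suc ` K)) x = (if 0 = x then b else 0) + Wt (c#bs) K x" for x
    unfolding Wt_Cons[of b "c#bs"] cutf_shift2 cutf_0 by (simp only: Wt_def)
  have "length (b#c#bs) - 1 = Suc (length (c#bs) - 1)" by simp
  then have e: "mrg (b#c#bs) (insert 0 (Suc ` K)) = map (Wt (b#c#bs) (insert 0 (Suc ` K))) [0..<Suc (cutf K (length (c#bs) - 1))]"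
    unfolding mrg_def by (simp only: cutf_shift2)
  define m where "m = cutf K (length (c#bs) - 1)"
  have u: "[0..<Suc m] = 0 # [Suc 0..<Suc m]" by (simp add: upt_conv_Cons del: upt_Suc)
  have "map (Wt (b#c#bs) (insert 0 (Suc ` K))) [Suc 0..<Suc m] = map (Wt (c#bs) K) [Suc 0..<Suc m]"
    by (rule map_cong) (auto simp: W)
  then show ?thesis using e u W unfolding m_def[symmetric] by (simp add: mrg_def m_def del: upt_Suc)
qed



lemma sum_list_pos: "\<forall>x\<in>set xs. (0::nat) < x \<Longrightarrow> xs \<noteq> [] \<Longrightarrow> 0 < sum_list xs"
  by (cases xs) auto

lemma comp_of:
  assumes "coarsening a bs" "is_composition bs"
  shows "is_composition a"
proof -
  obtain xs where xs: "concat xs = bs" "\<forall>x\<in>set xs. x \<noteq> []" "a = map sum_list xs"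
    using assms(1) unfolding coarsening_def by blast
  have "xs \<noteq> []" using xs assms(2) unfolding is_composition_def by auto
  moreover have "\<forall>y\<in>set a. 0 < y"
  proof
    fix y assume "y \<in> set a"
    then obtain x where x: "x \<in> set xs" "y = sum_list x" using xs by auto
    have "set x \<subseteq> set bs" using x xs by auto
    then show "0 < y" using x xs assms(2) sum_list_pos[of x] unfolding is_composition_def by auto
  qed
  ultimately show ?thesis using xs unfolding is_composition_def by auto
qed

lemma concat_single: "concat xs = [b] \<Longrightarrow> \<forall>x\<in>set xs. x \<noteq> [] \<Longrightarrow> xs = [[b]]"
proof (cases xs)
  case (Cons x ys)
  assume a: "concat xs = [b]" "\<forall>x\<in>set xs. x \<noteq> []"
  then have "x @ concat ys = [b]" "x \<noteq> []" using Cons by auto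
  then have "x = [b]" "concat ys = []" by (auto simp: append_eq_Cons_conv)
  then show ?thesis using Cons a by auto
qed simp

lemma Co_single: "0 < b \<Longrightarrow> Co [b] = {[b]}"
proof -
  assume b: "0 < b"
  have "coarsening a [b] \<longleftrightarrow> a = [b]" for a
  proof
    assume "coarsening a [b]"
    then obtain xs where xs: "concat xs = [b]" "\<forall>x\<in>set xs. x \<noteq> []" "a = map sum_list xs"
      unfolding coarsening_def by blast
    then have "xs = [[b]]" by (intro concat_single)
    then show "a = [b]" using xs by simp
  next
    assume "a = [b]"
    then show "coarsening a [b]" unfolding coarsening_def by (intro exI[of _ "[[b]]"]) auto
  qed
  then have "Co [b] = {a. is_composition a \<and> a = [b]}" unfolding Co_def by blast
  moreover have "is_composition [b]" using b unfolding is_composition_def by simp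
  ultimately show ?thesis by blast
qed

lemma coars_Cons:
  "coarsening a (b#c#bs) \<longleftrightarrow>
     (\<exists>a'. a = b # a' \<and> coarsening a' (c#bs)) \<or> (\<exists>a'. a = addhd b a' \<and> coarsening a' (c#bs))"
proof
  assume "coarsening a (b#c#bs)"
  then obtain xs where xs: "concat xs = b#c#bs" "\<forall>x\<in>set xs. x \<noteq> []" "a = map sum_list xs"
    unfolding coarsening_def by blast
  then obtain x ys where xy: "xs = x # ys" by (cases xs) auto
  with xs obtain r where r: "x = b # r" by (cases x) auto
  show "(\<exists>a'. a = b # a' \<and> coarsening a' (c#bs)) \<or> (\<exists>a'. a = addhd b a' \<and> coarsening a' (c#bs))"
  proof (cases "r = []")
    case True
    then have "concat ys = c#bs" using xs xy r by simp
    then have "coarsening (map sum_list ys) (c#bs)" using xs xy unfolding coarsening_def by auto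
    then show ?thesis using xs xy r True by auto
  next
    case False
    then have "concat (r#ys) = c#bs" using xs xy r by simp
    then have "coarsening (map sum_list (r#ys)) (c#bs)" using xs xy False unfolding coarsening_def
      by (intro exI[of _ "r#ys"]) auto
    moreover have "a = addhd b (map sum_list (r#ys))" using xs xy r by simp
    ultimately show ?thesis by blast
  qed
next
  assume "(\<exists>a'. a = b # a' \<and> coarsening a' (c#bs)) \<or> (\<exists>a'. a = addhd b a' \<and> coarsening a' (c#bs))"
  then show "coarsening a (b#c#bs)"
  proof
    assume "\<exists>a'. a = b # a' \<and> coarsening a' (c#bs)"
    then obtain a' xs where "a = b # a'" "concat xs = c#bs" "\<forall>x\<in>set xs. x \<noteq> []" "a' = map sum_list xs"
      unfolding coarsening_def by blast
    then show ?thesis unfolding coarsening_def by (intro exI[of _ "[b]#xs"]) auto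
  next
    assume "\<exists>a'. a = addhd b a' \<and> coarsening a' (c#bs)"
    then obtain a' xs where xs: "a = addhd b a'" "concat xs = c#bs" "\<forall>x\<in>set xs. x \<noteq> []" "a' = map sum_list xs"
      unfolding coarsening_def by blast
    then obtain r ys where "xs = r # ys" by (cases xs) auto
    then show ?thesis using xs unfolding coarsening_def by (intro exI[of _ "(b#r)#ys"]) auto
  qed
qed

lemma Co_Cons:
  assumes "0 < b" "is_composition (c#bs)"
  shows "Co (b#c#bs) = Cons b ` Co (c#bs) \<union> addhd b ` Co (c#bs)"
proof -
  have cb: "is_composition (b#c#bs)" using assms unfolding is_composition_def by auto
  show ?thesis
  proof (intro equalityI subsetI)
    fix a assume "a \<in> Co (b#c#bs)"
    then have "coarsening a (b#c#bs)" unfolding Co_def by auto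
    then show "a \<in> Cons b ` Co (c#bs) \<union> addhd b ` Co (c#bs)"
      using comp_of[OF _ assms(2)] unfolding coars_Cons Co_def by blast
  next
    fix a assume "a \<in> Cons b ` Co (c#bs) \<union> addhd b ` Co (c#bs)"
    then have "coarsening a (b#c#bs)" unfolding coars_Cons Co_def by blast
    then show "a \<in> Co (b#c#bs)" using comp_of[OF _ cb] unfolding Co_def by blast
  qed
qed

lemma Pow_Suc: "Pow {..<Suc n} = (image Suc) ` Pow {..<n} \<union> (\<lambda>K. insert 0 (Suc ` K)) ` Pow {..<n}"
proof (intro equalityI subsetI)
  fix K assume K: "K \<in> Pow {..<Suc n}"
  define K' where "K' = {i. Suc i \<in> K}"
  have K'n: "K' \<in> Pow {..<n}" using K unfolding K'_def by auto
  have "K - {0} = Suc ` K'" unfolding K'_def by (auto simp: image_iff) (metis not0_implies_Suc)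
  then have "K = (if 0 \<in> K then insert 0 (Suc ` K') else Suc ` K')" by auto
  then show "K \<in> (image Suc) ` Pow {..<n} \<union> (\<lambda>K. insert 0 (Suc ` K)) ` Pow {..<n}"
    using K'n by (auto split: if_splits)
qed auto

lemma mset_set_Pow_Suc:
  "mset_set (Pow {..<Suc n}) = image_mset (image Suc) (mset_set (Pow {..<n}))
     + image_mset (\<lambda>K. insert 0 (Suc ` K)) (mset_set (Pow {..<n}))"
proof -
  have i1: "inj_on (image Suc) (Pow {..<n})" by (simp add: inj_image_eq_iff inj_on_def)
  have i2: "inj_on (\<lambda>K. insert 0 (Suc ` K)) (Pow {..<n})"
  proof (rule inj_onI)
    fix X Y assume "insert 0 (Suc ` X) = insert (0::nat) (Suc ` Y)"
    then have "Suc ` X = Suc ` Y" by (metis Zero_not_Suc image_iff insert_ident)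
    then show "X = Y" by (simp add: inj_image_eq_iff)
  qed
  have d: "(image Suc) ` Pow {..<n} \<inter> (\<lambda>K. insert 0 (Suc ` K)) ` Pow {..<n} = {}" by auto
  show ?thesis unfolding Pow_Suc
    by (subst mset_set_Union) (use d i1 i2 in \<open>auto simp: image_mset_mset_set\<close>)
qed

lemma L_main:
  "is_composition bs \<Longrightarrow> mset_set (Co bs) = image_mset (mrg bs) (mset_set (Pow {..<length bs - 1}))"
proof (induction bs rule: induct_list012)
  case 1
  then show ?case by (simp add: is_composition_def)
next
  case (2 b)
  then have "0 < b" by (simp add: is_composition_def)
  then show ?case by (simp add: Co_single mrg_def Wt_def)
next
  case (3 b c bs)
  have b: "0 < b" and cc: "is_composition (c#bs)" using 3(3) by (auto simp: is_composition_def)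
  have IH: "mset_set (Co (c#bs)) = image_mset (mrg (c#bs)) (mset_set (Pow {..<length (c#bs) - 1}))"
    using 3(2) cc by blast
  have fin: "finite (Co (c#bs))"
  proof (rule ccontr)
    assume "infinite (Co (c#bs))"
    then have "mset_set (Co (c#bs)) = {#}" by simp
    moreover have "{} \<in> Pow {..<length (c#bs) - 1}" by simp
    then have "mset_set (Pow {..<length (c#bs) - 1}) \<noteq> {#}" by (simp only: mset_set_empty_iff) auto
    ultimately show False using IH by simp
  qed
  have ne: "x \<noteq> []" if "x \<in> Co (c#bs)" for x using that unfolding Co_def is_composition_def by auto
  have pos: "0 < hd x" if "x \<in> Co (c#bs)" for x using that unfolding Co_def is_composition_def
    by (cases x) auto
  have i1: "inj_on (Cons b) (Co (c#bs))" by (simp add: inj_on_def)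
  have i2: "inj_on (addhd b) (Co (c#bs))"
  proof (rule inj_onI)
    fix x y assume "x \<in> Co (c#bs)" "y \<in> Co (c#bs)" "addhd b x = addhd b y"
    then show "x = y" using ne by (cases x; cases y) auto
  qed
  have d: "Cons b ` Co (c#bs) \<inter> addhd b ` Co (c#bs) = {}"
  proof (rule ccontr)
    assume "Cons b ` Co (c#bs) \<inter> addhd b ` Co (c#bs) \<noteq> {}"
    then obtain x y where "x \<in> Co (c#bs)" "y \<in> Co (c#bs)" "b # x = addhd b y" by auto
    then show False using ne pos by (cases y) fastforce+
  qed
  have "mset_set (Co (b#c#bs)) = image_mset (Cons b) (mset_set (Co (c#bs))) + image_mset (addhd b) (mset_set (Co (c#bs)))"
    unfolding Co_Cons[OF b cc] using fin i1 i2 d by (simp add: mset_set_Union image_mset_mset_set)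
  also have "\<dots> = image_mset (\<lambda>K. b # mrg (c#bs) K) (mset_set (Pow {..<length (c#bs) - 1}))
     + image_mset (\<lambda>K. addhd b (mrg (c#bs) K)) (mset_set (Pow {..<length (c#bs) - 1}))"
    unfolding IH by (simp add: multiset.map_comp comp_def)
  also have "\<dots> = image_mset (mrg (b#c#bs)) (mset_set (Pow {..<length (b#c#bs) - 1}))"
  proof -
    have "length (b#c#bs) - 1 = Suc (length (c#bs) - 1)" by simp
    then show ?thesis by (simp only: mset_set_Pow_Suc image_mset_union multiset.map_comp comp_def mrg_shift1 mrg_shift2)
  qed
  finally show ?case .
qed



lemma coars_rev: "coarsening a bs \<Longrightarrow> coarsening (rev a) (rev bs)"
proof -
  assume "coarsening a bs"
  then obtain xs where xs: "concat xs = bs" "\<forall>x\<in>set xs. x \<noteq> []" "a = map sum_list xs"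
    unfolding coarsening_def by blast
  show ?thesis unfolding coarsening_def
    by (intro exI[of _ "rev (map rev xs)"]) (use xs in \<open>auto simp: rev_concat rev_map comp_def\<close>)
qed

lemma comp_rev: "is_composition (rev a) \<longleftrightarrow> is_composition a"
  unfolding is_composition_def by auto

lemma Co_rev: "Co (rev bs) = rev ` Co bs"
proof -
  have 1: "rev ` Co xs \<subseteq> Co (rev xs)" for xs
    unfolding Co_def using coars_rev comp_rev by blast
  have "Co (rev bs) \<subseteq> rev ` Co bs"
  proof
    fix a assume "a \<in> Co (rev bs)"
    then have "rev a \<in> Co (rev (rev bs))" using 1[of "rev bs"] by blast
    then show "a \<in> rev ` Co bs" by (metis image_eqI rev_rev_ident)
  qed
  then show ?thesis using 1 by blast
qed

lemma L_rev: "L_poly (rev bs) = L_poly bs"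
proof -
  have "L_poly (rev bs) = image_mset mset (mset_set (rev ` Co bs))"
    unfolding L_poly_def Co_def[symmetric] Co_rev ..
  also have "\<dots> = image_mset mset (image_mset rev (mset_set (Co bs)))"
    by (subst image_mset_mset_set) (auto simp: inj_on_def)
  also have "\<dots> = L_poly bs" unfolding L_poly_def Co_def[symmetric] by (simp add: multiset.map_comp comp_def)
  finally show ?thesis .
qed

lemma L_poly_mrg: "is_composition bs \<Longrightarrow>
  L_poly bs = image_mset (\<lambda>K. mset (mrg bs K)) (mset_set (Pow {..<length bs - 1}))"
  unfolding L_poly_def Co_def[symmetric] by (simp add: L_main multiset.map_comp comp_def)

lemma mset_mrg: "bs \<noteq> [] \<Longrightarrow> mset (mrg bs K) = image_mset (Wt bs K) (mset_set (cutf K ` {..<length bs}))"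
proof -
  assume "bs \<noteq> []"
  then have "{..<length bs} = {..<Suc (length bs - 1)}" by simp
  then show ?thesis unfolding mrg_def by (simp only: cutf_image mset_map mset_upt)
qed



lemma comp_partition_label:
  assumes fin: "finite V"
    and R: "\<And>u w. u \<in> V \<Longrightarrow> w \<in> V \<Longrightarrow> (u, w) \<in> (adj A)\<^sup>* \<longleftrightarrow> F u = F w"
  shows "comp_partition V A = image_mset (\<lambda>c. card {v\<in>V. F v = c}) (mset_set (F ` V))"
proof -
  define G where "G c = {v\<in>V. F v = c}" for c
  have "component V A v = G (F v)" if "v \<in> V" for v
    unfolding component_def G_def using R that by auto
  then have "components V A = G ` (F ` V)"
    unfolding components_def by (auto simp: image_iff)
  moreover have "inj_on G (F ` V)"
    by (rule inj_onI) (auto simp: G_def)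
  ultimately have "mset_set (components V A) = image_mset G (mset_set (F ` V))"
    by (simp add: image_mset_mset_set)
  then show ?thesis unfolding comp_partition_def by (simp add: multiset.map_comp comp_def G_def)
qed

lemma rtrancl_label:
  assumes "\<And>x y. (x, y) \<in> R \<Longrightarrow> F x = F y" "(u, w) \<in> R\<^sup>*"
  shows "F u = F w"
  using assms(2) by (induction rule: rtrancl_induct) (auto dest: assms(1))

lemma sym_adj: "(x, y) \<in> (adj A)\<^sup>* \<Longrightarrow> (y, x) \<in> (adj A)\<^sup>*"
proof -
  have "sym (adj A)" unfolding sym_def adj_def by (auto simp: insert_commute)
  then have "sym ((adj A)\<^sup>*)" by (rule sym_rtrancl)
  then show "(x, y) \<in> (adj A)\<^sup>* \<Longrightarrow> (y, x) \<in> (adj A)\<^sup>*" by (rule symD)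
qed



locale pcat =
  fixes V :: "'a set" and E :: "'a set set" and vs :: "'a list"
  assumes pc: "is_proper_caterpillar V E" and spn: "is_spine V E vs"
begin

lemma tree: "is_tree V E" using pc unfolding is_proper_caterpillar_def is_caterpillar_def by blast
lemma finV: "finite V" using tree unfolding is_tree_def is_graph_def by blast
lemma edgeV: "e \<in> E \<Longrightarrow> e \<subseteq> V" using tree unfolding is_tree_def is_graph_def by blast
lemma edge2: "e \<in> E \<Longrightarrow> card e = 2" using tree unfolding is_tree_def is_graph_def by blast
lemma conn: "u \<in> V \<Longrightarrow> w \<in> V \<Longrightarrow> (u, w) \<in> (adj E)\<^sup>*"
  using tree unfolding is_tree_def connected_graph_def by blast
lemma finE: "finite E"
proof -
  have "E \<subseteq> Pow V" using edgeV by blast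
  then show ?thesis using finV finite_subset by blast
qed
lemma dist: "distinct vs" using spn unfolding is_spine_def by blast
lemma len2: "2 \<le> length vs" using spn unfolding is_spine_def by blast
lemma set_vs: "set vs = {v. is_internal V E v}" using spn unfolding is_spine_def by blast
lemma vs_adj: "i < length vs \<Longrightarrow> j < length vs \<Longrightarrow> {vs ! i, vs ! j} \<in> E \<longleftrightarrow> (i + 1 = j \<or> j + 1 = i)"
  using spn unfolding is_spine_def by blast
lemma proper: "is_internal V E v \<Longrightarrow> \<exists>u. is_leaf V E u \<and> {u, v} \<in> E"
  using pc unfolding is_proper_caterpillar_def by blast

lemma int_not_leaf: "is_internal V E v \<Longrightarrow> \<not> is_leaf V E v"
  unfolding is_internal_def is_leaf_def by auto

lemma vs_V: "v \<in> set vs \<Longrightarrow> v \<in> V" using set_vs unfolding is_internal_def by auto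

lemma edge_form: "e \<in> E \<Longrightarrow> \<exists>x y. e = {x, y} \<and> x \<noteq> y"
  using edge2 card_2_iff by metis

lemma no_isolated: assumes "v \<in> V" shows "\<exists>e\<in>E. v \<in> e"
proof -
  have v0: "vs ! 0 \<in> set vs" using len2 by (intro nth_mem) linarith
  then have i0: "is_internal V E (vs ! 0)" using set_vs by auto
  show ?thesis
  proof (cases "v = vs ! 0")
    case True
    then have "card {e \<in> E. v \<in> e} \<ge> 2" using i0 unfolding is_internal_def degree_def by simp
    then have "{e \<in> E. v \<in> e} \<noteq> {}" by (metis card.empty not_numeral_le_zero)
    then show ?thesis by blast
  next
    case False
    have "(v, vs ! 0) \<in> (adj E)\<^sup>*" using conn assms vs_V v0 by blast
    then show ?thesis
    proof (cases rule: converse_rtranclE)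
      case base then show ?thesis using False by simp
    next
      case (step y) then show ?thesis unfolding adj_def by auto
    qed
  qed
qed

lemma int_or_leaf: "v \<in> V \<Longrightarrow> is_internal V E v \<or> is_leaf V E v"
proof -
  assume v: "v \<in> V"
  have "{e \<in> E. v \<in> e} \<noteq> {}" using no_isolated[OF v] by blast
  moreover have "finite {e \<in> E. v \<in> e}" using finE by simp
  ultimately have "degree E v \<ge> 1" unfolding degree_def by (simp add: Suc_leI card_gt_0_iff)
  then show ?thesis using v unfolding is_internal_def is_leaf_def by auto
qed

lemma leaf_unique:
  assumes "is_leaf V E u" "e \<in> E" "u \<in> e" "e' \<in> E" "u \<in> e'"
  shows "e = e'"
proof -
  have "card {e \<in> E. u \<in> e} = 1" using assms(1) unfolding is_leaf_def degree_def by simp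
  then obtain e0 where H: "{e \<in> E. u \<in> e} = {e0}" by (rule card_1_singletonE)
  have "e \<in> {e \<in> E. u \<in> e}" "e' \<in> {e \<in> E. u \<in> e}" using assms by simp_all
  then show ?thesis unfolding H by simp
qed

lemma edge_ne: "{u, p} \<in> E \<Longrightarrow> u \<noteq> p"
proof
  assume "{u, p} \<in> E" "u = p"
  then have "card {u, p} = 2" using edge2 by blast
  moreover have "card {u, p} = 1" using \<open>u = p\<close> by simp
  ultimately show False by simp
qed

definition par :: "'a \<Rightarrow> 'a" where "par u = (THE p. {u, p} \<in> E)"

lemma par_props:
  assumes "is_leaf V E u"
  shows "{u, par u} \<in> E" "\<And>p. {u, p} \<in> E \<Longrightarrow> p = par u"
proof -
  have uV: "u \<in> V" using assms unfolding is_leaf_def by auto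
  obtain e where e: "e \<in> E" "u \<in> e" using no_isolated[OF uV] by blast
  then obtain x y where xy: "e = {x, y}" "x \<noteq> y" using edge_form by blast
  obtain p where p: "{u, p} \<in> E"
  proof (cases "u = x")
    case True then show ?thesis using that e xy by blast
  next
    case False then have "u = y" using e xy by blast
    then show ?thesis using that[of x] e xy by (simp add: insert_commute)
  qed
  have uniq: "q = p" if "{u, q} \<in> E" for q
  proof -
    have "{u, q} = {u, p}" using leaf_unique[OF assms that _ p] by simp
    moreover have "u \<noteq> q" using edge_ne that by blast
    ultimately show ?thesis by (metis doubleton_eq_iff)
  qed
  have pp: "par u = p" unfolding par_def by (rule the_equality) (use p uniq in blast)+
  show "{u, par u} \<in> E" using p pp by simp
  show "\<And>q. {u, q} \<in> E \<Longrightarrow> q = par u" using uniq pp by metis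
qed

lemma par_in_vs:
  assumes u: "is_leaf V E u"
  shows "par u \<in> set vs"
proof (rule ccontr)
  assume np: "par u \<notin> set vs"
  define p where "p = par u"
  have e: "{u, p} \<in> E" using par_props(1)[OF u] p_def by simp
  have pV: "p \<in> V" using edgeV[OF e] by auto
  have pl: "is_leaf V E p" using int_or_leaf[OF pV] np set_vs p_def by auto
  have cl: "y \<in> {u, p}" if "x \<in> {u, p}" "(x, y) \<in> adj E" for x y
  proof -
    have xy: "{x, y} \<in> E" using that unfolding adj_def by simp
    have "is_leaf V E x" using that u pl by auto
    then have "{x, y} = {u, p}" using leaf_unique[OF _ xy _ e] that by auto
    then show ?thesis by auto
  qed
  have v0: "vs ! 0 \<in> set vs" using len2 by (intro nth_mem) linarith
  have uV: "u \<in> V" using u unfolding is_leaf_def by auto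
  have "(u, vs ! 0) \<in> (adj E)\<^sup>*" using conn uV vs_V v0 by blast
  then have "vs ! 0 \<in> {u, p}"
    by (induction rule: rtrancl_induct) (use cl in auto)
  then have "is_leaf V E (vs ! 0)" using u pl by auto
  moreover have "is_internal V E (vs ! 0)" using v0 set_vs by auto
  ultimately show False using int_not_leaf by blast
qed

lemma leaf_not_vs: "is_leaf V E u \<Longrightarrow> u \<notin> set vs"
  using set_vs int_not_leaf by auto

end


context pcat
begin

definition spv :: "'a \<Rightarrow> 'a" where "spv v = (if v \<in> set vs then v else par v)"
definition idx :: "'a \<Rightarrow> nat" where "idx v = (THE i. i < length vs \<and> vs ! i = spv v)"
definition Lv :: "'a \<Rightarrow> 'a set" where "Lv v = {u. is_leaf V E u \<and> {u, v} \<in> E}"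
definition SE :: "nat \<Rightarrow> 'a set" where "SE i = {vs ! i, vs ! Suc i}"
definition Lf :: "'a set set" where "Lf = {e \<in> E. \<exists>u\<in>e. is_leaf V E u}"
definition AK :: "nat set \<Rightarrow> 'a set set" where "AK K = Lf \<union> SE ` K"

lemma spv_in: "v \<in> V \<Longrightarrow> spv v \<in> set vs"
  using int_or_leaf[of v] par_in_vs[of v] set_vs unfolding spv_def by auto

lemma nth_unique: "i < length vs \<Longrightarrow> j < length vs \<Longrightarrow> vs ! i = vs ! j \<Longrightarrow> i = j"
  using dist by (simp add: nth_eq_iff_index_eq)

lemma idx_nth: "i < length vs \<Longrightarrow> idx (vs ! i) = i"
  unfolding idx_def spv_def by (rule the_equality) (auto intro: nth_unique)

lemma idx_props: assumes "v \<in> V" shows "idx v < length vs" "vs ! idx v = spv v"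
proof -
  obtain i where i: "i < length vs" "vs ! i = spv v" using spv_in[OF assms] by (auto simp: in_set_conv_nth)
  have "idx v = i" unfolding idx_def by (rule the_equality) (use i nth_unique in auto)
  then show "idx v < length vs" "vs ! idx v = spv v" using i by auto
qed

lemma leaf_spv: "is_leaf V E u \<Longrightarrow> spv u = par u"
  using leaf_not_vs unfolding spv_def by auto

lemma block: assumes i: "i < length vs" shows "{v\<in>V. idx v = i} = insert (vs ! i) (Lv (vs ! i))"
proof (intro equalityI subsetI)
  fix v assume "v \<in> {v\<in>V. idx v = i}"
  then have v: "v \<in> V" "idx v = i" by auto
  show "v \<in> insert (vs ! i) (Lv (vs ! i))"
  proof (cases "v \<in> set vs")
    case True
    then show ?thesis using idx_props[OF v(1)] v unfolding spv_def by auto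
  next
    case False
    then have l: "is_leaf V E v" using int_or_leaf[OF v(1)] set_vs by auto
    then have "vs ! i = par v" using idx_props[OF v(1)] v leaf_spv by auto
    then show ?thesis using par_props(1)[OF l] l unfolding Lv_def by auto
  qed
next
  fix v assume "v \<in> insert (vs ! i) (Lv (vs ! i))"
  then consider "v = vs ! i" | "is_leaf V E v" "{v, vs ! i} \<in> E" unfolding Lv_def by auto
  then show "v \<in> {v\<in>V. idx v = i}"
  proof cases
    case 1 then show ?thesis using idx_nth[OF i] vs_V i by auto
  next
    case 2
    then have "vs ! i = par v" using par_props(2) by blast
    then have "spv v = vs ! i" using leaf_spv 2 by simp
    moreover have "v \<in> V" using 2 unfolding is_leaf_def by simp
    ultimately show ?thesis using idx_props nth_unique i by fastforce
  qed
qed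

lemma Lv_fin: "finite (Lv v)"
proof -
  have "Lv v \<subseteq> V" unfolding Lv_def is_leaf_def by auto
  then show ?thesis using finV finite_subset by blast
qed

lemma vs_not_Lv: "i < length vs \<Longrightarrow> vs ! i \<notin> Lv (vs ! i)"
  using leaf_not_vs nth_mem unfolding Lv_def by blast

lemma beta_nth: "i < length vs \<Longrightarrow> spine_comp V E vs ! i = 1 + card (Lv (vs ! i))"
  unfolding spine_comp_def Lv_def by simp

lemma block_card: "i < length vs \<Longrightarrow> card {v\<in>V. idx v = i} = spine_comp V E vs ! i"
  using block Lv_fin vs_not_Lv beta_nth by simp

lemma beta_ge2: "i < length vs \<Longrightarrow> 2 \<le> spine_comp V E vs ! i"
proof -
  assume i: "i < length vs"
  then have "is_internal V E (vs ! i)" using set_vs nth_mem by blast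
  then obtain u where "is_leaf V E u" "{u, vs ! i} \<in> E" using proper by blast
  then have "Lv (vs ! i) \<noteq> {}" unfolding Lv_def by blast
  then have "card (Lv (vs ! i)) \<ge> 1" using Lv_fin by (simp add: Suc_leI card_gt_0_iff)
  then show ?thesis using beta_nth[OF i] by simp
qed

lemma leaf_edge: "e \<in> Lf \<Longrightarrow> \<exists>u. is_leaf V E u \<and> e = {u, par u}"
proof -
  assume "e \<in> Lf"
  then obtain u where u: "e \<in> E" "u \<in> e" "is_leaf V E u" unfolding Lf_def by blast
  then have "e = {u, par u}" using leaf_unique[OF u(3) u(1) u(2) par_props(1)[OF u(3)]] by simp
  then show ?thesis using u by blast
qed

lemma SE_E: "i < length vs - 1 \<Longrightarrow> SE i \<in> E"
  unfolding SE_def using vs_adj[of i "Suc i"] by simp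

lemma F_edge:
  assumes K: "K \<subseteq> {..<length vs - 1}" and e: "{x, y} \<in> AK K"
  shows "cutf K (idx x) = cutf K (idx y)"
proof (cases "{x, y} \<in> Lf")
  case True
  then obtain u where u: "is_leaf V E u" "{x, y} = {u, par u}" using leaf_edge by blast
  have pv: "par u \<in> set vs" using par_in_vs[OF u(1)] .
  have "spv u = par u" "spv (par u) = par u" using leaf_spv[OF u(1)] pv unfolding spv_def by auto
  moreover have "u \<in> V" "par u \<in> V" using u(1) pv vs_V unfolding is_leaf_def by auto
  ultimately have "idx u = idx (par u)" using idx_props nth_unique by metis
  then show ?thesis using u(2) by (auto simp: doubleton_eq_iff)
next
  case False
  then obtain i where i: "i \<in> K" "{x, y} = SE i" using e unfolding AK_def by blast
  have ik: "i < length vs - 1" using i K by auto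
  have "idx (vs ! i) = i" "idx (vs ! Suc i) = Suc i" using ik idx_nth by auto
  moreover have "cutf K (Suc i) = cutf K i" using i by (simp add: cutf_Suc)
  ultimately show ?thesis using i(2) unfolding SE_def by (auto simp: doubleton_eq_iff)
qed

lemma Lf_E: "Lf \<subseteq> E" unfolding Lf_def by auto

lemma AK_E: "K \<subseteq> {..<length vs - 1} \<Longrightarrow> AK K \<subseteq> E"
  unfolding AK_def using Lf_E SE_E by auto

lemma spine_path:
  assumes K: "K \<subseteq> {..<length vs - 1}"
  shows "i \<le> j \<Longrightarrow> j < length vs \<Longrightarrow> (\<forall>t. i \<le> t \<and> t < j \<longrightarrow> t \<in> K) \<Longrightarrow> (vs ! i, vs ! j) \<in> (adj (AK K))\<^sup>*"
proof (induction j)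
  case 0 then show ?case by simp
next
  case (Suc j)
  show ?case
  proof (cases "i = Suc j")
    case True then show ?thesis by simp
  next
    case False
    then have ij: "i \<le> j" using Suc by simp
    then have "(vs ! i, vs ! j) \<in> (adj (AK K))\<^sup>*" using Suc by simp
    moreover have "j \<in> K" using Suc ij by simp
    then have "(vs ! j, vs ! Suc j) \<in> adj (AK K)" unfolding adj_def AK_def SE_def by auto
    ultimately show ?thesis by simp
  qed
qed

lemma to_spv: "v \<in> V \<Longrightarrow> (v, spv v) \<in> (adj (AK K))\<^sup>*"
proof (cases "v \<in> set vs")
  case True then show ?thesis unfolding spv_def by simp
next
  case False
  assume v: "v \<in> V"
  then have l: "is_leaf V E v" using int_or_leaf[OF v] set_vs False by auto
  then have "{v, par v} \<in> Lf" using par_props(1)[OF l] unfolding Lf_def by auto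
  then have "(v, par v) \<in> adj (AK K)" unfolding adj_def AK_def by auto
  then show ?thesis using leaf_spv[OF l] by simp
qed

lemma F_conn:
  assumes K: "K \<subseteq> {..<length vs - 1}" and u: "u \<in> V" and w: "w \<in> V"
    and eq: "cutf K (idx u) = cutf K (idx w)"
  shows "(u, w) \<in> (adj (AK K))\<^sup>*"
proof -
  have sp: "(vs ! i, vs ! j) \<in> (adj (AK K))\<^sup>*"
    if "i \<le> j" "j < length vs" "cutf K i = cutf K j" for i j
    using spine_path[OF K that(1,2)] cutf_eq_kept[OF _ _ that(3)] by blast
  have "(vs ! idx u, vs ! idx w) \<in> (adj (AK K))\<^sup>*"
  proof (cases "idx u \<le> idx w")
    case True then show ?thesis using sp idx_props w eq by blast
  next
    case False then show ?thesis using sp[of "idx w" "idx u"] idx_props u eq sym_adj by fastforce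
  qed
  then have "(spv u, spv w) \<in> (adj (AK K))\<^sup>*" using idx_props u w by simp
  then show ?thesis using to_spv[OF u] to_spv[OF w] sym_adj by (meson rtrancl_trans)
qed

end


context pcat
begin

abbreviation "bt \<equiv> spine_comp V E vs"

lemma len_bt: "length bt = length vs" unfolding spine_comp_def by simp

lemma comp_bt: "is_composition bt"
  unfolding is_composition_def spine_comp_def using len2 by auto

lemma idx_image: "idx ` V = {..<length vs}"
proof (intro equalityI subsetI)
  fix i assume "i \<in> idx ` V" then show "i \<in> {..<length vs}" using idx_props by auto
next
  fix i assume "i \<in> {..<length vs}"
  then have "i = idx (vs ! i)" "vs ! i \<in> V" using idx_nth vs_V by auto
  then show "i \<in> idx ` V" by blast
qed

lemma card_label: "card {v\<in>V. cutf K (idx v) = c} = Wt bt K c"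
proof -
  define I where "I = {i\<in>{..<length vs}. cutf K i = c}"
  have "{v\<in>V. cutf K (idx v) = c} = (\<Union>i\<in>I. {v\<in>V. idx v = i})"
    unfolding I_def using idx_props by auto
  moreover have "card (\<Union>i\<in>I. {v\<in>V. idx v = i}) = (\<Sum>i\<in>I. card {v\<in>V. idx v = i})"
    by (rule card_UN_disjoint) (auto simp: I_def finV)
  moreover have "(\<Sum>i\<in>I. card {v\<in>V. idx v = i}) = (\<Sum>i\<in>I. bt ! i)"
    by (rule sum.cong) (auto simp: I_def block_card)
  moreover have "(\<Sum>i\<in>I. bt ! i) = Wt bt K c"
    unfolding I_def Wt_def len_bt by (rule sum.inter_filter) simp
  ultimately show ?thesis by simp
qed

lemma cp_AK:
  assumes K: "K \<subseteq> {..<length vs - 1}"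
  shows "comp_partition V (AK K) = mset (mrg bt K)"
proof -
  have R: "(u, w) \<in> (adj (AK K))\<^sup>* \<longleftrightarrow> cutf K (idx u) = cutf K (idx w)" if "u \<in> V" "w \<in> V" for u w
  proof
    assume "(u, w) \<in> (adj (AK K))\<^sup>*"
    then show "cutf K (idx u) = cutf K (idx w)"
      by (rule rtrancl_label[rotated]) (use F_edge[OF K] in \<open>auto simp: adj_def\<close>)
  next
    assume "cutf K (idx u) = cutf K (idx w)"
    then show "(u, w) \<in> (adj (AK K))\<^sup>*" using F_conn[OF K that] by blast
  qed
  have "comp_partition V (AK K) = image_mset (\<lambda>c. card {v\<in>V. cutf K (idx v) = c}) (mset_set ((\<lambda>v. cutf K (idx v)) ` V))"
    by (rule comp_partition_label[OF finV R])
  also have "(\<lambda>v. cutf K (idx v)) ` V = cutf K ` {..<length bt}"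
    by (metis image_image idx_image len_bt)
  also have "image_mset (\<lambda>c. card {v\<in>V. cutf K (idx v) = c}) (mset_set (cutf K ` {..<length bt})) = mset (mrg bt K)"
    using mset_mrg[of bt K] comp_bt card_label unfolding is_composition_def by simp
  finally show ?thesis .
qed

lemma no1:
  assumes K: "K \<subseteq> {..<length vs - 1}"
  shows "1 \<notin># comp_partition V (AK K)"
proof
  assume "1 \<in># comp_partition V (AK K)"
  then have "1 \<in># image_mset (Wt bt K) (mset_set (cutf K ` {..<length bt}))"
    using cp_AK[OF K] mset_mrg[of bt K] comp_bt unfolding is_composition_def by simp
  then obtain i where i: "i < length vs" "Wt bt K (cutf K i) = 1" using len_bt by auto
  have "(if cutf K i = cutf K i then bt ! i else 0) \<le> Wt bt K (cutf K i)"
    unfolding Wt_def using i(1) len_bt by (intro member_le_sum) auto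
  then show False using beta_ge2[OF i(1)] i(2) by simp
qed

lemma singleton_comp:
  assumes A: "A \<subseteq> E" and e: "e \<in> Lf" "e \<notin> A"
  shows "1 \<in># comp_partition V A"
proof -
  obtain u where u: "is_leaf V E u" "e = {u, par u}" using leaf_edge[OF e(1)] by blast
  have uV: "u \<in> V" using u unfolding is_leaf_def by simp
  have "w = u" if "(u, w) \<in> (adj A)\<^sup>*" for w
    using that
  proof (cases rule: converse_rtranclE)
    case base then show ?thesis by simp
  next
    case (step y)
    then have "{u, y} \<in> A" unfolding adj_def by simp
    then have "{u, y} \<in> E" "{u, y} \<in> A" using A by auto
    then have "y = par u" "{u, y} \<in> A" using par_props(2)[OF u(1)] by auto
    then show ?thesis using e u by simp
  qed
  then have "component V A u = {u}" unfolding component_def using uV by auto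
  then have "{u} \<in> components V A" unfolding components_def using uV by force
  moreover have "finite (components V A)" unfolding components_def using finV by simp
  ultimately show ?thesis unfolding comp_partition_def by force
qed

lemma SE_not_Lf: "i < length vs - 1 \<Longrightarrow> SE i \<notin> Lf"
proof
  assume i: "i < length vs - 1" and "SE i \<in> Lf"
  then obtain u where "u \<in> SE i" "is_leaf V E u" unfolding Lf_def by blast
  moreover have "vs ! i \<in> set vs" "vs ! Suc i \<in> set vs" using i by auto
  ultimately show False using leaf_not_vs unfolding SE_def by auto
qed

lemma SE_inj: "i < length vs - 1 \<Longrightarrow> j < length vs - 1 \<Longrightarrow> SE i = SE j \<Longrightarrow> i = j"
proof -
  assume i: "i < length vs - 1" and j: "j < length vs - 1" and e: "SE i = SE j"
  have eq: "a < length vs \<Longrightarrow> b < length vs \<Longrightarrow> vs ! a = vs ! b \<longleftrightarrow> a = b" for a b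
    using nth_unique by blast
  have "vs ! i \<in> {vs ! j, vs ! Suc j}" "vs ! Suc i \<in> {vs ! j, vs ! Suc j}"
    using e unfolding SE_def by blast+
  then show "i = j" using i j eq by auto
qed

lemma inj_AK: "inj_on AK (Pow {..<length vs - 1})"
proof -
  have sub: "K \<subseteq> K'" if K: "K \<subseteq> {..<length vs - 1}" "K' \<subseteq> {..<length vs - 1}" "AK K = AK K'" for K K'
  proof
    fix i assume "i \<in> K"
    then have "SE i \<in> AK K'" "i < length vs - 1" using K unfolding AK_def by auto
    then obtain j where "j \<in> K'" "SE i = SE j" using SE_not_Lf unfolding AK_def by blast
    then show "i \<in> K'" using SE_inj \<open>i < length vs - 1\<close> K by blast
  qed
  show ?thesis by (rule inj_onI) (use sub in blast)
qed

lemma good_sets: "{A \<in> Pow E. 1 \<notin># comp_partition V A} = AK ` Pow {..<length vs - 1}"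
proof (intro equalityI subsetI)
  fix A assume "A \<in> {A \<in> Pow E. 1 \<notin># comp_partition V A}"
  then have A: "A \<subseteq> E" "1 \<notin># comp_partition V A" by auto
  have Lf: "Lf \<subseteq> A" using singleton_comp A by blast
  define K where "K = {i. i < length vs - 1 \<and> SE i \<in> A}"
  have "A = AK K"
  proof (intro equalityI subsetI)
    fix e assume eA: "e \<in> A"
    show "e \<in> AK K"
    proof (cases "e \<in> Lf")
      case True then show ?thesis unfolding AK_def by simp
    next
      case False
      have eE: "e \<in> E" using eA A by auto
      then obtain x y where xy: "e = {x, y}" "x \<noteq> y" using edge_form by blast
      have "x \<in> V" "y \<in> V" using edgeV[OF eE] xy by auto
      moreover have "\<not> is_leaf V E x" "\<not> is_leaf V E y" using False eE xy unfolding Lf_def by auto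
      ultimately have "x \<in> set vs" "y \<in> set vs" using int_or_leaf set_vs by auto
      then obtain i j where ij: "i < length vs" "j < length vs" "x = vs ! i" "y = vs ! j"
        by (auto simp: in_set_conv_nth)
      then have "i + 1 = j \<or> j + 1 = i" using vs_adj eE xy by blast
      then show ?thesis
      proof
        assume "i + 1 = j"
        then have "e = SE i" "i < length vs - 1" using ij xy unfolding SE_def by auto
        then show ?thesis using eA unfolding AK_def K_def by auto
      next
        assume "j + 1 = i"
        then have "e = SE j" "j < length vs - 1" using ij xy unfolding SE_def by auto
        then show ?thesis using eA unfolding AK_def K_def by auto
      qed
    qed
  next
    fix e assume "e \<in> AK K" then show "e \<in> A" using Lf unfolding AK_def K_def by auto
  qed
  moreover have "K \<in> Pow {..<length vs - 1}" unfolding K_def by auto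
  ultimately show "A \<in> AK ` Pow {..<length vs - 1}" by blast
next
  fix A assume "A \<in> AK ` Pow {..<length vs - 1}"
  then obtain K where "K \<subseteq> {..<length vs - 1}" "A = AK K" by auto
  then show "A \<in> {A \<in> Pow E. 1 \<notin># comp_partition V A}" using AK_E no1 by auto
qed

lemma main_eq: "L_poly bt = filter_mset (\<lambda>m. 1 \<notin># m) (U_poly V E)"
proof -
  have "filter_mset (\<lambda>m. 1 \<notin># m) (U_poly V E) =
      image_mset (comp_partition V) (mset_set {A \<in> Pow E. 1 \<notin># comp_partition V A})"
    unfolding U_poly_def using finE by (simp add: filter_mset_image_mset)
  also have "\<dots> = image_mset (comp_partition V) (image_mset AK (mset_set (Pow {..<length vs - 1})))"
    unfolding good_sets by (subst image_mset_mset_set[OF inj_AK]) (rule refl)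
  also have "\<dots> = image_mset (\<lambda>K. mset (mrg bt K)) (mset_set (Pow {..<length vs - 1}))"
    unfolding multiset.map_comp comp_def
    by (rule image_mset_cong) (simp add: cp_AK)
  also have "\<dots> = L_poly bt" using L_poly_mrg[OF comp_bt] len_bt by simp
  finally show ?thesis by simp
qed

end

lemma L_Phi:
  assumes "is_proper_caterpillar V E" "\<beta> \<in> Phi V E"
  shows "L_poly \<beta> = filter_mset (\<lambda>m. 1 \<notin># m) (U_poly V E)"
proof -
  obtain vs where vs: "is_spine V E vs" "\<beta> = spine_comp V E vs \<or> \<beta> = rev (spine_comp V E vs)"
    using assms(2) unfolding Phi_def by blast
  interpret pcat V E vs using assms(1) vs(1) by unfold_locales
  show ?thesis using vs(2) main_eq L_rev by auto
qed

theorem corollary2p4: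
  fixes V :: "'a set" and E :: "'a set set" and V' :: "'b set" and E' :: "'b set set"
  assumes "is_proper_caterpillar V E" and "is_proper_caterpillar V' E'"
    and "U_poly V E = U_poly V' E'"
    and "\<beta> \<in> Phi V E" and "\<beta>' \<in> Phi V' E'"
  shows "L_poly \<beta> = L_poly \<beta>'"
  using L_Phi[OF assms(1,4)] L_Phi[OF assms(2,5)] assms(3) by simp


end
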